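(* Let $I$ be a set, $\mathcal{E}=(E_i)_{i\in I}$ a family of nonempty sets, $R,S$ multiple relations in $\mathcal{E}$, and $L\subseteq I$ with $J_R\cap J_S\subseteq L\subseteq J_R\cup J_S$. Then $(R\bowtie S)_{|L}=R_{|L\cap J_R}\bowtie S_{|L\cap J_S}$. In particular, if $J_R\cap J_S=\emptyset$ this holds for every $L\subseteq J_R\cup J_S$.
   Context: For $J\subseteq I$, $Z_J=\prod_{j\in J}E_j$ ($Z_\emptyset=\{\bullet\}$). A multiple relation is $R=(J_R,G_R)$ with $J_R\subseteq I$, $G_R\subseteq Z_{J_R}$; $R_{|K}=(K,\{x_{|K}:x\in G_R\})$ for $K\subseteq J_R$; $R\bowtie S=(J_R\cup J_S,\{x\in Z_{J_R\cup J_S}: x_{|J_R}\in G_R,\ x_{|J_S}\in G_S\})$. *)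

theory Defs
  imports "HOL-Library.FuncSet"
begin

text \<open>Elements of Z_J are extensional functions on J (PiE J E); Z_{} = {\<lambda>_. undefined}.
A multiple relation is a pair (J_R, G_R).\<close>

type_synonym ('i, 'e) mrel = "'i set \<times> ('i \<Rightarrow> 'e) set"

definition is_mrel :: "'i set \<Rightarrow> ('i \<Rightarrow> 'e set) \<Rightarrow> ('i, 'e) mrel \<Rightarrow> bool" where
  "is_mrel I E R \<longleftrightarrow> fst R \<subseteq> I \<and> snd R \<subseteq> PiE (fst R) E"

definition mrestr :: "('i, 'e) mrel \<Rightarrow> 'i set \<Rightarrow> ('i, 'e) mrel" where
  "mrestr R K = (K, (\<lambda>x. restrict x K) ` snd R)"

definition mjoin :: "('i \<Rightarrow> 'e set) \<Rightarrow> ('i, 'e) mrel \<Rightarrow> ('i, 'e) mrel \<Rightarrow> ('i, 'e) mrel" where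
  "mjoin E R S = (fst R \<union> fst S,
     {x \<in> PiE (fst R \<union> fst S) E. restrict x (fst R) \<in> snd R \<and> restrict x (fst S) \<in> snd S})"

end

theory Submission
  imports Defs
begin

lemma key:
  assumes R: "is_mrel I E R" and S: "is_mrel I E S"
    and L1: "fst R \<inter> fst S \<subseteq> L" and L2: "L \<subseteq> fst R \<union> fst S"
  shows "mrestr (mjoin E R S) L = mjoin E (mrestr R (L \<inter> fst R)) (mrestr S (L \<inter> fst S))"
proof -
  obtain JR GR where Rd: "R = (JR, GR)" by (cases R)
  obtain JS GS where Sd: "S = (JS, GS)" by (cases S)
  have GR: "GR \<subseteq> PiE JR E" and GS: "GS \<subseteq> PiE JS E"
    using R S by (auto simp: is_mrel_def Rd Sd)
  have LR: "L \<inter> JR \<union> L \<inter> JS = L" using L2 by (auto simp: Rd Sd)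
  have "snd (mrestr (mjoin E R S) L) = snd (mjoin E (mrestr R (L \<inter> fst R)) (mrestr S (L \<inter> fst S)))"
  proof (rule set_eqI, rule iffI)
    fix y assume "y \<in> snd (mrestr (mjoin E R S) L)"
    then obtain x where y: "y = restrict x L" and x: "x \<in> PiE (JR \<union> JS) E"
      "restrict x JR \<in> GR" "restrict x JS \<in> GS"
      by (auto simp: mrestr_def mjoin_def Rd Sd)
    have "y \<in> PiE L E" using x(1) L2 by (auto simp: y Rd Sd)
    moreover have "restrict y (L \<inter> JR) = restrict (restrict x JR) (L \<inter> JR)"
      by (auto simp: y restrict_def)
    moreover have "restrict y (L \<inter> JS) = restrict (restrict x JS) (L \<inter> JS)"
      by (auto simp: y restrict_def)
    moreover have "restrict (restrict x JR) (L \<inter> JR) \<in> (\<lambda>x. restrict x (L \<inter> JR)) ` GR"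
      using x(2) by blast
    moreover have "restrict (restrict x JS) (L \<inter> JS) \<in> (\<lambda>x. restrict x (L \<inter> JS)) ` GS"
      using x(3) by blast
    ultimately show "y \<in> snd (mjoin E (mrestr R (L \<inter> fst R)) (mrestr S (L \<inter> fst S)))"
      unfolding mrestr_def mjoin_def Rd Sd by (simp add: LR del: restrict_restrict)
  next
    fix y assume "y \<in> snd (mjoin E (mrestr R (L \<inter> fst R)) (mrestr S (L \<inter> fst S)))"
    then obtain r s where y: "y \<in> PiE L E" and r: "r \<in> GR" "restrict y (L \<inter> JR) = restrict r (L \<inter> JR)"
      and s: "s \<in> GS" "restrict y (L \<inter> JS) = restrict s (L \<inter> JS)"
      by (auto simp: mrestr_def mjoin_def Rd Sd LR)
    have rE: "r \<in> PiE JR E" and sE: "s \<in> PiE JS E" using r s GR GS by auto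
    define x where "x = (\<lambda>i. if i \<in> L then y i else if i \<in> JR then r i else if i \<in> JS then s i else undefined)"
    have ry: "\<And>i. i \<in> L \<Longrightarrow> i \<in> JR \<Longrightarrow> y i = r i"
      using r(2) by (metis IntI restrict_apply')
    have sy: "\<And>i. i \<in> L \<Longrightarrow> i \<in> JS \<Longrightarrow> y i = s i"
      using s(2) by (metis IntI restrict_apply')
    have I: "JR \<inter> JS \<subseteq> L" using L1 by (simp add: Rd Sd)
    have xr: "restrict x JR = r"
    proof
      fix i show "restrict x JR i = r i"
        using rE ry by (auto simp: x_def restrict_def PiE_def extensional_def)
    qed
    have xs: "restrict x JS = s"
    proof
      fix i show "restrict x JS i = s i"
        using sE sy I by (auto simp: x_def restrict_def PiE_def extensional_def)
    qed
    have xP: "x \<in> PiE (JR \<union> JS) E"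
      using y rE sE L2 by (auto simp: x_def PiE_def extensional_def Pi_def Rd Sd)
    have "restrict x L = y"
    proof
      fix i show "restrict x L i = y i" using y by (auto simp: x_def restrict_def PiE_def extensional_def)
    qed
    then show "y \<in> snd (mrestr (mjoin E R S) L)"
      using xP xr xs r(1) s(1) by (force simp: mrestr_def mjoin_def Rd Sd)
  qed
  then show ?thesis using LR by (simp add: mrestr_def mjoin_def Rd Sd)
qed

theorem mainTheorem11:
  fixes I :: "'i set" and E :: "'i \<Rightarrow> 'e set" and R S :: "('i, 'e) mrel"
  assumes "\<forall>i\<in>I. E i \<noteq> {}"
    and "is_mrel I E R" and "is_mrel I E S"
  shows "(\<forall>L. L \<subseteq> I \<and> fst R \<inter> fst S \<subseteq> L \<and> L \<subseteq> fst R \<union> fst S \<longrightarrow>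
            mrestr (mjoin E R S) L = mjoin E (mrestr R (L \<inter> fst R)) (mrestr S (L \<inter> fst S)))
      \<and> (fst R \<inter> fst S = {} \<longrightarrow> (\<forall>L. L \<subseteq> fst R \<union> fst S \<longrightarrow>
            mrestr (mjoin E R S) L = mjoin E (mrestr R (L \<inter> fst R)) (mrestr S (L \<inter> fst S))))"
  using key[OF assms(2,3)] by auto

end
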